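(* (i) Every hyperbolic homogeneous polynomial $f\in\mathbb{R}[x,y]$ has at least one real linear factor, and every real linear factor of a hyperbolic homogeneous polynomial has multiplicity one. (ii) An elliptic homogeneous polynomial $f\in\mathbb{R}[x,y]$ has no real linear factors.
   Context: For a polynomial $f\in\mathbb{R}[x,y]$, its Hessian polynomial is $\mathrm{Hess}\,f=f_{xx}f_{yy}-f_{xy}^2$. A homogeneous polynomial $f\in\mathbb{R}[x,y]$ is called hyperbolic (resp. elliptic) if its Hessian polynomial $\mathrm{Hess}\,f$ has no real linear factors and $\mathrm{Hess}\,f(x,y)\le 0$ (resp. $\ge 0$) for all $(x,y)\in\mathbb{R}^2$. A real linear factor means a factor of the form $ax+by$ with $(a,b)\in\mathbb{R}^2\setminus\{0\}$. *)

theory Defs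
  imports "HOL-Computational_Algebra.Polynomial"
begin

text \<open>Real polynomials in two variables x, y are represented as
  R[x][y] = real poly poly: the outer variable is y, the coefficients are
  polynomials in x. This ring is isomorphic to R[x,y], so divisibility
  below is divisibility in R[x,y].\<close>

type_synonym bipoly = "real poly poly"

definition eval2 :: "bipoly \<Rightarrow> real \<Rightarrow> real \<Rightarrow> real" where
  "eval2 p x y = poly (map_poly (\<lambda>c. poly c x) p) y"

definition dX :: "bipoly \<Rightarrow> bipoly" where
  "dX p = map_poly pderiv p"

definition dY :: "bipoly \<Rightarrow> bipoly" where
  "dY p = pderiv p"

definition hess :: "bipoly \<Rightarrow> bipoly" where
  "hess f = dX (dX f) * dY (dY f) - (dX (dY f))^2"

text \<open>The linear form a x + b y.\<close>
definition linear_form :: "real \<Rightarrow> real \<Rightarrow> bipoly" where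
  "linear_form a b = [: [:0, a:], [:b:] :]"

definition homogeneous :: "bipoly \<Rightarrow> bool" where
  "homogeneous f \<longleftrightarrow> (\<exists>d. \<forall>i j. coeff (coeff f j) i \<noteq> 0 \<longrightarrow> i + j = d)"

definition has_real_linear_factor :: "bipoly \<Rightarrow> bool" where
  "has_real_linear_factor f \<longleftrightarrow> (\<exists>a b. (a, b) \<noteq> (0, 0) \<and> linear_form a b dvd f)"

definition hyperbolic :: "bipoly \<Rightarrow> bool" where
  "hyperbolic f \<longleftrightarrow> homogeneous f \<and> \<not> has_real_linear_factor (hess f)
     \<and> (\<forall>x y. eval2 (hess f) x y \<le> 0)"

definition elliptic :: "bipoly \<Rightarrow> bool" where
  "elliptic f \<longleftrightarrow> homogeneous f \<and> \<not> has_real_linear_factor (hess f)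
     \<and> (\<forall>x y. eval2 (hess f) x y \<ge> 0)"

end

theory Submission
  imports Defs
begin



lemma poly_map_eval: "poly (map_poly (\<lambda>c. poly c x) P) (poly r x) = poly (poly P r) x"
  by (induction P) (auto simp: map_poly_pCons)

lemma eval2_alt: "eval2 p x y = poly (poly p [:y:]) x"
  unfolding eval2_def using poly_map_eval[of x p "[:y:]"] by simp

lemma eval2_mult[simp]: "eval2 (p*q) x y = eval2 p x y * eval2 q x y"
  by (simp add: eval2_alt)
lemma eval2_add[simp]: "eval2 (p+q) x y = eval2 p x y + eval2 q x y"
  by (simp add: eval2_alt)
lemma eval2_diff[simp]: "eval2 (p-q) x y = eval2 p x y - eval2 q x y"
  by (simp add: eval2_alt)
lemma eval2_power[simp]: "eval2 (p^n) x y = eval2 p x y ^ n"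
  by (simp add: eval2_alt poly_power)
lemma eval2_const[simp]: "eval2 [:[:k:]:] x y = k"
  by (simp add: eval2_alt)
lemma eval2_lf[simp]: "eval2 (linear_form a b) x y = a*x + b*y"
  by (simp add: eval2_alt linear_form_def)
lemma eval2_X[simp]: "eval2 [:[:0,1:]:] x y = x"
  by (simp add: eval2_alt)
lemma eval2_Y[simp]: "eval2 (pCons 0 1) x y = y"
  by (simp add: eval2_alt)

lemma dX_add[simp]: "dX (p+q) = dX p + dX q"
  by (rule poly_eqI) (simp add: dX_def coeff_map_poly pderiv_add)
lemma dX_diff[simp]: "dX (p-q) = dX p - dX q"
  by (rule poly_eqI) (simp add: dX_def coeff_map_poly pderiv_diff)
lemma dX_0[simp]: "dX 0 = 0" by (simp add: dX_def)
lemma pderiv_sum': "pderiv (sum f A) = (\<Sum>a\<in>A. pderiv (f a))"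
  by (induction A rule: infinite_finite_induct) (auto simp: pderiv_add)

lemma dX_mult: "dX (p*q) = dX p * q + p * dX q"
proof (rule poly_eqI)
  fix n
  have "pderiv (\<Sum>i\<le>n. coeff p i * coeff q (n - i)) =
     (\<Sum>i\<le>n. pderiv (coeff p i) * coeff q (n - i)) + (\<Sum>i\<le>n. coeff p i * pderiv (coeff q (n - i)))"
    by (simp add: pderiv_sum' pderiv_mult sum.distrib[symmetric] algebra_simps)
  then show "coeff (dX (p*q)) n = coeff (dX p * q + p * dX q) n"
    by (simp add: dX_def coeff_map_poly coeff_mult)
qed
lemma dX_const[simp]: "dX [:[:k:]:] = 0"
  by (simp add: dX_def map_poly_pCons)
lemma dX_lf[simp]: "dX (linear_form a b) = [:[:a:]:]"
  by (simp add: dX_def linear_form_def pderiv_pCons map_poly_pCons)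
lemma dY_lf[simp]: "dY (linear_form a b) = [:[:b:]:]"
  by (simp add: dY_def linear_form_def pderiv_pCons)
lemma dY_mult: "dY (p*q) = dY p * q + p * dY q"
  by (simp add: dY_def pderiv_mult)
lemma dY_add[simp]: "dY (p+q) = dY p + dY q"
  by (simp add: dY_def pderiv_add)
lemma dY_diff[simp]: "dY (p-q) = dY p - dY q"
  by (simp add: dY_def pderiv_diff)
lemma dY_0[simp]: "dY 0 = 0" by (simp add: dY_def)

lemma dXY: "dY (dX f) = dX (dY f)"
  by (rule poly_eqI) (simp add: dX_def dY_def coeff_map_poly coeff_pderiv pderiv_mult pderiv_add)




lemma hess_decomp:
  fixes a b :: real and g :: bipoly
  defines "l \<equiv> linear_form a b" and "A \<equiv> [:[:a:]:]" and "B \<equiv> [:[:b:]:]"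
  defines "gx \<equiv> dX g" and "gy \<equiv> dY g"
  shows "hess (l*g) = l * (2*A*gx*dY gy + dX gx*2*B*gy + l*dX gx*dY gy
            - 2*(B*gx + A*gy)*dX gy - l*(dX gy)^2) - (A*gy - B*gx)^2"
proof -
  have fx: "dX (l*g) = A*g + l*gx" by (simp add: dX_mult l_def A_def gx_def)
  have fy: "dY (l*g) = B*g + l*gy" by (simp add: dY_mult l_def B_def gy_def)
  have dA: "dX A = 0" "dY A = 0" "dX B = 0" "dY B = 0"
    by (auto simp: A_def B_def dY_def pderiv_pCons)
  have fxx: "dX (dX (l*g)) = 2*A*gx + l*dX gx"
    by (simp add: fx dX_mult dA l_def A_def[symmetric] algebra_simps gx_def)
  have fyy: "dY (dY (l*g)) = 2*B*gy + l*dY gy"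
    by (simp add: fy dY_mult dA l_def B_def[symmetric] algebra_simps gy_def)
  have fxy: "dX (dY (l*g)) = B*gx + A*gy + l*dX gy"
    unfolding fy by (simp add: dX_mult dA l_def A_def[symmetric] algebra_simps gx_def)
  show ?thesis unfolding hess_def fxx fyy fxy
    by (simp add: algebra_simps power2_eq_square)
qed

lemma vanish_dvd:
  assumes ab: "(a,b) \<noteq> (0::real,0::real)"
    and van: "\<And>u v. a*u + b*v = 0 \<Longrightarrow> eval2 P u v = 0"
  shows "linear_form a b dvd P"
proof (cases "b = 0")
  case False
  define r where "r = [:0, -a/b:]"
  have "\<forall>x. poly (poly P r) x = 0"
  proof
    fix x
    have "eval2 P x (poly r x) = 0" using van[of x "poly r x"] False by (simp add: r_def)
    then show "poly (poly P r) x = 0" unfolding eval2_def poly_map_eval .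
  qed
  then have "poly P r = 0" using poly_all_0_iff_0 by blast
  then have d1: "[:-r, 1:] dvd P" using poly_eq_0_iff_dvd by blast
  have "[:-r,1:] = linear_form a b * [:[:1/b:]:]"
    using False by (simp add: r_def linear_form_def)
  then have "linear_form a b dvd [:-r,1:]" by (metis dvdI)
  then show ?thesis using d1 dvd_trans by blast
next
  case True
  then have a: "a \<noteq> 0" using ab by simp
  have "\<forall>y. poly (map_poly (\<lambda>c. poly c 0) P) y = 0"
    using van[of 0] True unfolding eval2_def by simp
  then have m0: "map_poly (\<lambda>c. poly c 0) P = 0" using poly_all_0_iff_0 by blast
  have cd: "[:0,1:] dvd coeff P j" for j
  proof -
    have "poly (coeff P j) 0 = 0"
      using arg_cong[OF m0, of "\<lambda>p. coeff p j"] by (simp add: coeff_map_poly)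
    then show ?thesis using poly_eq_0_iff_dvd[of "coeff P j" 0] by simp
  qed
  have "P = [:[:0,1:]:] * map_poly (\<lambda>c. c div [:0,1:]) P"
  proof (rule poly_eqI)
    fix j
    show "coeff P j = coeff ([:[:0,1:]:] * map_poly (\<lambda>c. c div [:0,1:]) P) j"
    proof -
      have "[:0,1:] * (coeff P j div [:0,1:]) = coeff P j" using cd[of j] by (rule dvd_mult_div_cancel)
      then show ?thesis by (simp add: coeff_map_poly)
    qed
  qed
  then have "[:[:0,1:]:] dvd P" by (metis dvdI)
  moreover have "linear_form a b = [:[:0,1:]:] * [:[:a:]:]" using True
    by (simp add: linear_form_def)
  moreover have "linear_form a b dvd [:[:0,1:]:]"
  proof -
    have "[:[:0,1:]:] = linear_form a b * [:[:1/a:]:]" using True a by (simp add: linear_form_def)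
    then show ?thesis by (metis dvdI)
  qed
  ultimately show ?thesis using dvd_trans by blast
qed




lemma double_factor:
  assumes ab: "(a,b) \<noteq> (0::real,0::real)" and d: "(linear_form a b)^2 dvd f"
  shows "has_real_linear_factor (hess f)"
proof -
  define l where "l = linear_form a b"
  define A where "A = ([:[:a:]:] :: bipoly)"
  define B where "B = ([:[:b:]:] :: bipoly)"
  obtain k where fk: "f = l^2 * k" using d l_def by (auto elim: dvdE)
  define g where "g = l*k"
  have f: "f = l*g" by (simp add: fk g_def power2_eq_square)
  have h: "A*dY g - B*dX g = l*(A*dY k - B*dX k)"
    by (simp add: g_def dX_mult dY_mult l_def A_def B_def algebra_simps)
  from hess_decomp[of a b g] obtain R where "hess f = l*R - (A*dY g - B*dX g)^2"
    unfolding f l_def A_def B_def by blast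
  then have "hess f = l*(R - l*(A*dY k - B*dX k)^2)"
    unfolding h by (simp add: algebra_simps power2_eq_square)
  then have "l dvd hess f" by (metis dvdI)
  then show ?thesis using ab l_def has_real_linear_factor_def by blast
qed

lemma single_factor_elliptic:
  assumes ab: "(a,b) \<noteq> (0::real,0::real)" and d: "linear_form a b dvd f"
    and nn: "\<forall>x y. eval2 (hess f) x y \<ge> 0"
  shows "has_real_linear_factor (hess f)"
proof -
  define l where "l = linear_form a b"
  define A where "A = ([:[:a:]:] :: bipoly)"
  define B where "B = ([:[:b:]:] :: bipoly)"
  obtain g where f: "f = l * g" using d l_def by (auto elim: dvdE)
  from hess_decomp[of a b g] obtain R where hf: "hess f = l*R - (A*dY g - B*dX g)^2"
    unfolding f l_def A_def B_def by blast
  have "l dvd hess f" unfolding l_def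
  proof (rule vanish_dvd[OF ab])
    fix u v assume uv: "a*u + b*v = 0"
    have "eval2 (hess f) u v = - ((eval2 (A*dY g - B*dX g) u v)^2)"
      unfolding hf using uv by (simp add: l_def)
    also have "\<dots> \<le> 0" by simp
    finally show "eval2 (hess f) u v = 0" using nn by (meson order_antisym)
  qed
  then show ?thesis using ab l_def has_real_linear_factor_def by blast
qed




definition hom_deg :: "bipoly \<Rightarrow> nat \<Rightarrow> bool" where
  "hom_deg f d \<longleftrightarrow> (\<forall>i j. coeff (coeff f j) i \<noteq> 0 \<longrightarrow> i + j = d)"

lemma coeff_coeff_dX: "coeff (coeff (dX f) j) i = real (Suc i) * coeff (coeff f j) (Suc i)"
  by (simp add: dX_def coeff_map_poly coeff_pderiv)

lemma coeff_coeff_dY: "coeff (coeff (dY f) j) i = real (Suc j) * coeff (coeff f (Suc j)) i"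
  by (simp add: dY_def coeff_pderiv of_nat_poly)

lemma hom_dX: "hom_deg f d \<Longrightarrow> hom_deg (dX f) (d-1)"
  unfolding hom_deg_def coeff_coeff_dX by (metis add_Suc diff_Suc_1 mult_eq_0_iff)

lemma hom_dY: "hom_deg f d \<Longrightarrow> hom_deg (dY f) (d-1)"
  unfolding hom_deg_def coeff_coeff_dY by (metis add_Suc_right diff_Suc_1 mult_eq_0_iff)

lemma hom0: assumes "hom_deg f 0" shows "dX f = 0" "dY f = 0"
proof -
  show "dX f = 0" by (rule poly_eqI, rule poly_eqI) (use assms in \<open>auto simp: hom_deg_def coeff_coeff_dX\<close>)
  show "dY f = 0" by (rule poly_eqI, rule poly_eqI) (use assms in \<open>auto simp: hom_deg_def coeff_coeff_dY\<close>)
qed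

lemma euler:
  assumes "hom_deg f d"
  shows "[:[:0,1:]:] * dX f + pCons 0 1 * dY f = [:[:real d:]:] * f"
proof (rule poly_eqI, rule poly_eqI)
  fix j i
  have L: "coeff (coeff ([:[:0,1:]:] * dX f + pCons 0 1 * dY f) j) i
      = (real i + real j) * coeff (coeff f j) i"
  proof -
    have a: "coeff (coeff ([:[:0,1:]:] * dX f) j) i = real i * coeff (coeff f j) i"
      by (cases i) (simp_all add: coeff_coeff_dX coeff_pCons)
    have b: "coeff (coeff (pCons 0 1 * dY f) j) i = real j * coeff (coeff f j) i"
      by (cases j) (simp_all add: coeff_coeff_dY)
    show ?thesis using a b by (simp add: algebra_simps)
  qed
  show "coeff (coeff ([:[:0,1:]:] * dX f + pCons 0 1 * dY f) j) i = coeff (coeff ([:[:real d:]:] * f) j) i"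
    unfolding L using assms unfolding hom_deg_def
    by (cases "coeff (coeff f j) i = 0") (auto simp: coeff_pCons simp flip: of_nat_add)
qed




lemma monom_scale:
  fixes c :: "real poly"
  assumes "\<forall>i. coeff c i \<noteq> 0 \<longrightarrow> i = d"
  shows "poly c (t*x) = t^d * poly c x"
proof -
  define k where "k = coeff c d"
  have e: "c = monom k d"
    by (rule poly_eqI) (use assms in \<open>auto simp: coeff_monom k_def\<close>)
  show ?thesis unfolding e by (simp add: poly_monom power_mult_distrib)
qed

lemma eval2_zero[simp]: "eval2 0 x y = 0" by (simp add: eval2_def)

lemma eval2_pCons: "eval2 (pCons c f) x y = poly c x + y * eval2 f x y"
  by (simp add: eval2_alt)

lemma hom_scale: "hom_deg f d \<Longrightarrow> eval2 f (t*x) (t*y) = t^d * eval2 f x y"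
proof (induction f arbitrary: d rule: pCons_induct)
  case 0
  then show ?case by (simp add: eval2_def)
next
  case (pCons c f)
  have hc: "\<forall>i. coeff c i \<noteq> 0 \<longrightarrow> i = d"
  proof (intro allI impI)
    fix i assume "coeff c i \<noteq> 0"
    then show "i = d" using pCons.prems[unfolded hom_deg_def, rule_format, where i=i and j=0] by simp
  qed
  have hf: "\<forall>i j. coeff (coeff f j) i \<noteq> 0 \<longrightarrow> i + Suc j = d"
  proof (intro allI impI)
    fix i j assume "coeff (coeff f j) i \<noteq> 0"
    then show "i + Suc j = d" using pCons.prems[unfolded hom_deg_def, rule_format, where i=i and j="Suc j"] by simp
  qed
  show ?case
  proof (cases d)
    case 0
    then have "f = 0" using hf by (intro poly_eqI) (metis add_is_0 coeff_0 nat.distinct(1))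
    then show ?thesis using monom_scale[OF hc] by (simp add: eval2_pCons)
  next
    case (Suc d')
    then have "hom_deg f d'" using hf unfolding hom_deg_def by auto
    then have "eval2 f (t*x) (t*y) = t^d' * eval2 f x y" using pCons.IH by blast
    then show ?thesis using monom_scale[OF hc] Suc by (simp add: eval2_pCons algebra_simps)
  qed
qed

lemma poly_dX_const: "poly (dX f) [:c:] = pderiv (poly f [:c:])"
  by (induction f) (auto simp: dX_def map_poly_pCons pderiv_add pderiv_mult pderiv_smult)




lemma poly_global_min:
  fixes g :: "real poly"
  assumes nn: "\<forall>x. poly g x \<ge> 0"
  shows "\<exists>x0. \<forall>x. poly g x0 \<le> poly g x"
proof (cases "degree g = 0")
  case True
  then obtain k where "g = [:k:]" using degree_eq_zeroE by blast
  then show ?thesis by simp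
next
  case False
  then have "filterlim (poly g) at_infinity at_infinity"
    using filterlim_poly_at_infinity by blast
  then have "filterlim (\<lambda>x. norm (poly g x)) at_top at_infinity"
    by (rule filterlim_at_infinity_imp_norm_at_top)
  then have "eventually (\<lambda>x. poly g 0 + 1 \<le> norm (poly g x)) at_infinity"
    by (simp add: filterlim_at_top)
  then obtain b where b: "\<And>x::real. b \<le> norm x \<Longrightarrow> poly g 0 + 1 \<le> norm (poly g x)"
    unfolding eventually_at_infinity by blast
  have "continuous_on {-\<bar>b\<bar>..\<bar>b\<bar>} (poly g)"
    by (intro continuous_intros)
  then obtain x0 where x0: "x0 \<in> {-\<bar>b\<bar>..\<bar>b\<bar>}" and m: "\<forall>y\<in>{-\<bar>b\<bar>..\<bar>b\<bar>}. poly g x0 \<le> poly g y"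
    using continuous_attains_inf[of "{-\<bar>b\<bar>..\<bar>b\<bar>}" "poly g"] by auto
  have "\<forall>x. poly g x0 \<le> poly g x"
  proof
    fix x
    show "poly g x0 \<le> poly g x"
    proof (cases "\<bar>x\<bar> \<le> \<bar>b\<bar>")
      case True then have "x \<in> {-\<bar>b\<bar>..\<bar>b\<bar>}" by (simp add: abs_le_iff)
      then show ?thesis using m by blast
    next
      case False
      then have "poly g 0 + 1 \<le> norm (poly g x)" using b by auto
      moreover have "poly g x0 \<le> poly g 0" using m by auto
      ultimately show ?thesis using nn by auto
    qed
  qed
  then show ?thesis by blast
qed

lemma poly_min_second:
  fixes g :: "real poly"
  assumes m: "\<forall>x. poly g x0 \<le> poly g x"
  shows "poly (pderiv g) x0 = 0" "poly (pderiv (pderiv g)) x0 \<ge> 0"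
proof -
  show d1: "poly (pderiv g) x0 = 0"
    by (rule DERIV_local_min[OF poly_DERIV[of g x0], of 1]) (use m in auto)
  show "poly (pderiv (pderiv g)) x0 \<ge> 0"
  proof (rule ccontr)
    assume "\<not> ?thesis"
    then have "poly (pderiv (pderiv g)) x0 < 0" by simp
    from DERIV_neg_dec_right[OF poly_DERIV[of "pderiv g" x0] this]
    obtain d where d: "d > 0" "\<forall>h>0. h < d \<longrightarrow> poly (pderiv g) x0 > poly (pderiv g) (x0 + h)" by blast
    obtain z where z: "x0 < z" "z < x0 + d/2"
      "poly g (x0 + d/2) - poly g x0 = (x0 + d/2 - x0) * poly (pderiv g) z"
      using poly_MVT[of x0 "x0 + d/2" g] d by auto
    have "poly (pderiv g) z < 0" using d(2)[rule_format, of "z - x0"] z d1 d by auto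
    then have "(x0 + d/2 - x0) * poly (pderiv g) z < 0" using d by (simp add: mult_pos_neg)
    then have "poly g (x0 + d/2) - poly g x0 < 0" using z(3) by linarith
    then show False using m by (metis diff_ge_0_iff_ge not_le)
  qed
qed




lemma euler_d:
  assumes "hom_deg f d" and h: "h = dX f \<or> h = dY f"
  shows "[:[:0,1:]:] * dX h + pCons 0 1 * dY h = [:[:real d - 1:]:] * h"
proof (cases "d = 0")
  case True
  then have "hom_deg f 0" using assms(1) by simp
  then have "dX f = 0" "dY f = 0" by (rule hom0)+
  then have "h = 0" using h by auto
  then show ?thesis by simp
next
  case False
  have "hom_deg h (d-1)" using h hom_dX hom_dY assms(1) by blast
  from euler[OF this] show ?thesis using False by (simp add: of_nat_diff)
qed

lemma euler_eval:
  assumes "hom_deg f d"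
  shows "x * eval2 (dX f) x y + y * eval2 (dY f) x y = real d * eval2 f x y"
  using arg_cong[OF euler[OF assms], of "\<lambda>q. eval2 q x y"]
  unfolding eval2_add eval2_mult eval2_X eval2_Y eval2_const .

lemma euler_d_eval:
  assumes "hom_deg f d" and h: "h = dX f \<or> h = dY f"
  shows "x * eval2 (dX h) x y + y * eval2 (dY h) x y = (real d - 1) * eval2 h x y"
  using arg_cong[OF euler_d[OF assms], of "\<lambda>q. eval2 q x y"]
  unfolding eval2_add eval2_mult eval2_X eval2_Y eval2_const .

lemma exist_factor:
  assumes hom: "homogeneous f" and nh: "\<not> has_real_linear_factor (hess f)"
    and le: "\<forall>x y. eval2 (hess f) x y \<le> 0"
  shows "has_real_linear_factor f"
proof (rule ccontr)
  assume nf: "\<not> has_real_linear_factor f"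
  obtain d where hd: "hom_deg f d" using hom unfolding homogeneous_def hom_deg_def by blast
  define p where "p = poly f [:1:]"
  have ev: "\<And>q x. eval2 q x 1 = poly (poly q [:1:]) x" by (simp add: eval2_alt)
  have pd1: "poly (dX f) [:1:] = pderiv p" by (simp add: p_def poly_dX_const)
  have pd2: "poly (dX (dX f)) [:1:] = pderiv (pderiv p)" by (simp add: p_def poly_dX_const)
  define g where "g = p*p"
  have "\<forall>x. poly g x \<ge> 0" by (simp add: g_def)
  then obtain x0 where m: "\<forall>x. poly g x0 \<le> poly g x" using poly_global_min by blast
  define P0 where "P0 = poly p x0"
  define P1 where "P1 = poly (pderiv p) x0"
  define P2 where "P2 = poly (pderiv (pderiv p)) x0"
  have g1: "2*P0*P1 = 0" using poly_min_second(1)[OF m]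
    by (simp add: g_def pderiv_mult P0_def P1_def)
  have g2: "2*P1*P1 + 2*P0*P2 \<ge> 0" using poly_min_second(2)[OF m]
    by (simp add: g_def pderiv_mult pderiv_add P0_def P1_def P2_def algebra_simps)
  have P0: "P0 \<noteq> 0"
  proof
    assume z: "P0 = 0"
    have "linear_form 1 (-x0) dvd f"
    proof (rule vanish_dvd)
      fix u v :: real assume "1*u + (-x0)*v = 0"
      then have u: "u = v*x0" by simp
      have a: "eval2 f (v*x0) (v*1) = v^d * eval2 f x0 1" by (rule hom_scale[OF hd])
      have b: "eval2 f x0 1 = P0" unfolding P0_def p_def by (rule ev)
      show "eval2 f u v = 0" using a unfolding b z u by simp
    qed simp
    moreover have "(1::real, -x0) \<noteq> (0,0)" by simp
    ultimately show False using nf unfolding has_real_linear_factor_def by blast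
  qed
  then have P1: "P1 = 0" using g1 by simp
  with g2 have P02: "P0*P2 \<ge> 0" by simp
  define Fy where "Fy = eval2 (dY f) x0 1"
  define Fxy where "Fxy = eval2 (dX (dY f)) x0 1"
  define Fyy where "Fyy = eval2 (dY (dY f)) x0 1"
  have e1: "x0 * P1 + Fy = real d * P0"
    using euler_eval[OF hd, of x0 1]
    by (simp add: Fy_def P1_def P0_def ev pd1 p_def)
  have e2: "x0 * P2 + Fxy = (real d - 1) * P1"
    using euler_d_eval[OF hd, of "dX f" x0 1]
    by (simp add: Fxy_def P1_def P2_def ev pd1 pd2 dXY)
  have e3: "x0 * Fxy + Fyy = (real d - 1) * Fy"
    using euler_d_eval[OF hd, of "dY f" x0 1]
    by (simp add: Fxy_def Fyy_def Fy_def)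
  have H: "eval2 (hess f) x0 1 = P2 * Fyy - Fxy^2"
    by (simp add: hess_def Fxy_def Fyy_def P2_def ev pd2)
  have Fxy: "Fxy = - x0 * P2" using e2 P1 by simp
  have Fy: "Fy = real d * P0" using e1 P1 by simp
  have Fyy: "Fyy = (real d - 1) * real d * P0 + x0^2 * P2" using e3 Fxy Fy
    by (simp add: algebra_simps power2_eq_square)
  have H2: "eval2 (hess f) x0 1 = ((real d - 1) * real d) * (P0 * P2)"
    unfolding H Fyy Fxy by (simp add: algebra_simps power2_eq_square)
  have "(real d - 1) * real d \<ge> 0" by (cases d) auto
  then have "eval2 (hess f) x0 1 \<ge> 0" unfolding H2 using P02 by simp
  then have H0: "eval2 (hess f) x0 1 = 0" using le by (meson order_antisym)
  define k where "k = d - 1 - 1"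
  have h1: "hom_deg (dX (dX f)) k" "hom_deg (dY (dY f)) k" "hom_deg (dX (dY f)) k"
    unfolding k_def by (rule hom_dX[OF hom_dX[OF hd]], rule hom_dY[OF hom_dY[OF hd]], rule hom_dX[OF hom_dY[OF hd]])
  have "linear_form 1 (-x0) dvd hess f"
  proof (rule vanish_dvd)
    fix u v :: real assume "1*u + (-x0)*v = 0"
    then have u: "u = v*x0" by simp
    have s1: "eval2 (dX (dX f)) (v*x0) v = v^k * eval2 (dX (dX f)) x0 1"
      using hom_scale[OF h1(1), of v x0 1] by simp
    have s2: "eval2 (dY (dY f)) (v*x0) v = v^k * eval2 (dY (dY f)) x0 1"
      using hom_scale[OF h1(2), of v x0 1] by simp
    have s3: "eval2 (dX (dY f)) (v*x0) v = v^k * eval2 (dX (dY f)) x0 1"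
      using hom_scale[OF h1(3), of v x0 1] by simp
    have "eval2 (hess f) (v*x0) v = v^k * v^k * eval2 (hess f) x0 1"
      unfolding hess_def eval2_diff eval2_mult eval2_power s1 s2 s3
      by (simp only: power2_eq_square ring_distribs mult_ac)
    then show "eval2 (hess f) u v = 0" using H0 u by simp
  qed simp
  moreover have "(1::real, -x0) \<noteq> (0,0)" by simp
  ultimately show False using nh unfolding has_real_linear_factor_def by blast
qed

theorem lemma1:
  shows "(\<forall>f. hyperbolic f \<longrightarrow>
            has_real_linear_factor f \<and>
            (\<forall>a b. (a, b) \<noteq> (0::real, 0::real) \<and> linear_form a b dvd f
                 \<longrightarrow> \<not> (linear_form a b)^2 dvd f))
       \<and> (\<forall>f. elliptic f \<longrightarrow> \<not> has_real_linear_factor f)"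
proof (intro conjI allI impI)
  fix f assume "hyperbolic f"
  then show "has_real_linear_factor f" using exist_factor unfolding hyperbolic_def by blast
next
  fix f a b assume "hyperbolic f" "(a, b) \<noteq> (0::real, 0::real) \<and> linear_form a b dvd f"
  then show "\<not> (linear_form a b)^2 dvd f" using double_factor unfolding hyperbolic_def by blast
next
  fix f assume "elliptic f"
  then show "\<not> has_real_linear_factor f" using single_factor_elliptic
    unfolding elliptic_def has_real_linear_factor_def by blast
qed


end
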